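(* Let $(S,T,E)$ be a $P$-Petri net with control-states with $\|T\|_\infty>0$, let $\Theta$ be a multicycle of it, let $Q\subseteq P$, let $d=|P|$, and let $k$ be a number with $k>\|\Delta(\Theta)|_Q\|_1(1+2|S|\|T\|_\infty)^{d(d+1)}$. Then there exists a multicycle $\Theta'$ such that: (i) for every $p\in P$: $\Delta(\Theta')(p)\leq 0$ if $\Delta(\Theta)(p)\leq0$; $\Delta(\Theta')(p)<0$ if $\Delta(\Theta)(p)\leq -k$; $\Delta(\Theta')(p)\geq0$ if $\Delta(\Theta)(p)\geq 0$; $\Delta(\Theta')(p)>0$ if $\Delta(\Theta)(p)\geq k$; (ii) $\Delta(\Theta')(q)=0$ for every $q\in Q$; (iii) for every edge $e\in E$, $\#\Theta'(e)>0$ if $\#\Theta(e)\geq k$; (iv) $|\Theta'|\leq(|E|+d)(1+2|S|\|T\|_\infty)^{d(d+1)}$.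
   Context: A $P$-configuration is a map in $\mathbb{N}^P$; a $P$-transition is a pair $t=(\alpha_t,\beta_t)$ of $P$-configurations; a $P$-Petri net $T$ is a finite set of $P$-transitions, and $\|T\|_\infty$ is the maximum entry among all $\alpha_t,\beta_t$, $t\in T$. A $P$-Petri net with control-states is a triple $(S,T,E)$ with $S$ a nonempty finite set of control-states and $E\subseteq S\times T\times S$. A path from $s$ to $s'$ is a word $e_1\cdots e_k$ of edges with control-states $s_0=s,\dots,s_k=s'$ and $e_j=(s_{j-1},t_j,s_j)$; its length is $k$; it is a cycle if $s=s'$. A multicycle $\Theta$ is a finite sequence $\theta_1,\dots,\theta_m$ of cycles, with length $|\Theta|=\sum_j|\theta_j|$. The Parikh image $\#\pi\in\mathbb{N}^E$ of a word of edges counts occurrences of each edge, and $\#\Theta=\sum_j\#\theta_j$. The displacement of a transition is $\Delta(t)=\beta_t-\alpha_t\in\mathbb{Z}^P$, of an edge $(s,t,s')$ is $\Delta(t)$, of a word of edges is the sum of displacements of its edges, and $\Delta(\Theta)=\sum_j\Delta(\theta_j)$. For $a\in\mathbb{Z}^P$, $\|a\|_1=\sum_p|a(p)|$ and $a|_Q(q)=a(q)$ for $q\in Q$ (with $Q\subseteq P$). *)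

theory Defs
  imports Main "HOL-Library.Cardinality"
begin

text \<open>Places P are the elements of a finite type 'p. A P-configuration is a map 'p => nat;
  a transition is a pair (alpha, beta) of configurations.\<close>

type_synonym 'p conf = "'p \<Rightarrow> nat"
type_synonym 'p transition = "'p conf \<times> 'p conf"
type_synonym ('s, 'p) edge = "'s \<times> 'p transition \<times> 's"

definition norm_inf :: "'p::finite transition set \<Rightarrow> nat" where
  "norm_inf T = Max ({0} \<union> {fst t p | t p. t \<in> T} \<union> {snd t p | t p. t \<in> T})"

definition petri_cs :: "'s set \<Rightarrow> 'p transition set \<Rightarrow> ('s, 'p) edge set \<Rightarrow> bool" where
  "petri_cs S T E \<longleftrightarrow> finite S \<and> S \<noteq> {} \<and> finite T \<and> E \<subseteq> S \<times> T \<times> S"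

fun is_path :: "'s set \<Rightarrow> ('s, 'p) edge set \<Rightarrow> 's \<Rightarrow> ('s, 'p) edge list \<Rightarrow> 's \<Rightarrow> bool" where
  "is_path S E s [] s' \<longleftrightarrow> s \<in> S \<and> s = s'"
| "is_path S E s (e # es) s' \<longleftrightarrow> e \<in> E \<and> fst e = s \<and> s \<in> S \<and> is_path S E (snd (snd e)) es s'"

definition is_cycle :: "'s set \<Rightarrow> ('s, 'p) edge set \<Rightarrow> ('s, 'p) edge list \<Rightarrow> bool" where
  "is_cycle S E \<theta> \<longleftrightarrow> (\<exists>s. is_path S E s \<theta> s)"

definition is_multicycle :: "'s set \<Rightarrow> ('s, 'p) edge set \<Rightarrow> ('s, 'p) edge list list \<Rightarrow> bool" where
  "is_multicycle S E \<Theta> \<longleftrightarrow> (\<forall>\<theta> \<in> set \<Theta>. is_cycle S E \<theta>)"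

definition mc_length :: "('s, 'p) edge list list \<Rightarrow> nat" where
  "mc_length \<Theta> = (\<Sum>\<theta>\<leftarrow>\<Theta>. length \<theta>)"

definition mc_parikh :: "('s, 'p) edge list list \<Rightarrow> ('s, 'p) edge \<Rightarrow> nat" where
  "mc_parikh \<Theta> e = (\<Sum>\<theta>\<leftarrow>\<Theta>. count_list \<theta> e)"

definition delta_trans :: "'p transition \<Rightarrow> 'p \<Rightarrow> int" where
  "delta_trans t p = int (snd t p) - int (fst t p)"

definition delta_edge :: "('s, 'p) edge \<Rightarrow> 'p \<Rightarrow> int" where
  "delta_edge e = delta_trans (fst (snd e))"

definition delta_word :: "('s, 'p) edge list \<Rightarrow> 'p \<Rightarrow> int" where
  "delta_word es p = (\<Sum>e\<leftarrow>es. delta_edge e p)"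

definition delta_mc :: "('s, 'p) edge list list \<Rightarrow> 'p \<Rightarrow> int" where
  "delta_mc \<Theta> p = (\<Sum>\<theta>\<leftarrow>\<Theta>. delta_word \<theta> p)"

definition norm1_restr :: "('p \<Rightarrow> int) \<Rightarrow> 'p set \<Rightarrow> int" where
  "norm1_restr a Q = (\<Sum>q\<in>Q. \<bar>a q\<bar>)"

end

theory Submission
  imports Defs Complex_Main "HOL-Library.FuncSet" "HOL-Library.Multiset"
begin

lemma dependence:
  fixes c :: "'k \<Rightarrow> 'i \<Rightarrow> real"
  assumes "finite K" "finite F" "card K < card F"
  shows "\<exists>\<nu>. (\<forall>i. i \<notin> F \<longrightarrow> \<nu> i = 0) \<and> (\<exists>i\<in>F. \<nu> i \<noteq> 0) \<and>
             (\<forall>k\<in>K. (\<Sum>i\<in>F. \<nu> i * c k i) = 0)"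
  using assms
proof (induct K arbitrary: F c rule: finite_induct)
  case empty
  then obtain i0 where "i0 \<in> F" by (metis card.empty ex_in_conv less_irrefl)
  then show ?case by (intro exI[of _ "\<lambda>i. if i = i0 then 1 else 0"]) auto
next
  case (insert k K)
  show ?case
  proof (cases "\<forall>i\<in>F. c k i = 0")
    case True
    from insert have "card K < card F" by simp
    from insert(3)[OF insert(4) this] obtain \<nu> where \<nu>: "\<forall>i. i \<notin> F \<longrightarrow> \<nu> i = 0" "\<exists>i\<in>F. \<nu> i \<noteq> 0"
       "\<forall>k\<in>K. (\<Sum>i\<in>F. \<nu> i * c k i) = 0" by blast
    show ?thesis using \<nu> True by (intro exI[of _ \<nu>]) auto
  next
    case False
    then obtain i0 where i0: "i0 \<in> F" "c k i0 \<noteq> 0" by blast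
    define F' where "F' = F - {i0}"
    define c' where "c' = (\<lambda>k' i. c k' i - c k' i0 * c k i / c k i0)"
    have fF': "finite F'" using insert F'_def by simp
    have cF': "card K < card F'" using insert i0 F'_def by (simp add: card_Diff_singleton)
    from insert(3)[OF fF' cF', of c'] obtain \<nu>' where \<nu>': "\<forall>i. i \<notin> F' \<longrightarrow> \<nu>' i = 0" "\<exists>i\<in>F'. \<nu>' i \<noteq> 0"
       "\<forall>k\<in>K. (\<Sum>i\<in>F'. \<nu>' i * c' k i) = 0" by blast
    define a where "a = - (\<Sum>j\<in>F'. \<nu>' j * c k j) / c k i0"
    define \<nu> where "\<nu> = (\<lambda>i. if i = i0 then a else \<nu>' i)"
    have split: "(\<Sum>i\<in>F. \<nu> i * g i) = a * g i0 + (\<Sum>i\<in>F'. \<nu>' i * g i)" for g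
    proof -
      have "(\<Sum>i\<in>F. \<nu> i * g i) = \<nu> i0 * g i0 + (\<Sum>i\<in>F'. \<nu> i * g i)"
        using insert(4) i0 F'_def by (simp add: sum.remove)
      also have "(\<Sum>i\<in>F'. \<nu> i * g i) = (\<Sum>i\<in>F'. \<nu>' i * g i)"
        by (rule sum.cong) (auto simp: \<nu>_def F'_def)
      finally show ?thesis by (simp add: \<nu>_def)
    qed
    have "\<forall>i. i \<notin> F \<longrightarrow> \<nu> i = 0" using \<nu>'(1) i0 by (auto simp: \<nu>_def F'_def)
    moreover have "\<exists>i\<in>F. \<nu> i \<noteq> 0" using \<nu>'(2) by (auto simp: \<nu>_def F'_def)
    moreover have "(\<Sum>i\<in>F. \<nu> i * c k i) = 0"
      unfolding split using i0 by (simp add: a_def)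
    moreover have "(\<Sum>i\<in>F. \<nu> i * c k' i) = 0" if "k' \<in> K" for k'
    proof -
      have "0 = (\<Sum>i\<in>F'. \<nu>' i * c' k' i)" using \<nu>'(3) that by simp
      also have "\<dots> = (\<Sum>i\<in>F'. \<nu>' i * c k' i) - (c k' i0 / c k i0) * (\<Sum>i\<in>F'. \<nu>' i * c k i)"
        by (simp add: c'_def sum_subtractf sum_distrib_left algebra_simps)
      also have "\<dots> = (\<Sum>i\<in>F'. \<nu>' i * c k' i) + a * c k' i0"
        using i0 by (simp add: a_def field_simps)
      finally show ?thesis unfolding split by simp
    qed
    ultimately show ?thesis by (intro exI[of _ \<nu>]) auto
  qed
qed

definition feas :: "'i set \<Rightarrow> ('i \<Rightarrow> 'p \<Rightarrow> real) \<Rightarrow> ('i \<Rightarrow> real) \<Rightarrow> real \<Rightarrow> bool" where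
  "feas A v \<mu> s \<longleftrightarrow> (\<forall>i\<in>A. 0 \<le> \<mu> i \<and> \<mu> i \<le> 1) \<and> (\<forall>p. (\<Sum>i\<in>A. \<mu> i * v i p) = 0) \<and> (\<Sum>i\<in>A. \<mu> i) = s"

definition fracs :: "'i set \<Rightarrow> ('i \<Rightarrow> real) \<Rightarrow> 'i set" where
  "fracs A \<mu> = {i\<in>A. 0 < \<mu> i \<and> \<mu> i < 1}"

lemma vertex_step:
  fixes v :: "'i \<Rightarrow> 'p::finite \<Rightarrow> real"
  assumes fin: "finite A" and fe: "feas A v \<mu> s" and big: "card (fracs A \<mu>) > CARD('p) + 1"
  shows "\<exists>\<mu>'. feas A v \<mu>' s \<and> card (fracs A \<mu>') < card (fracs A \<mu>)"
proof -
  define F where "F = fracs A \<mu>"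
  have FA: "F \<subseteq> A" by (auto simp: F_def fracs_def)
  have fF: "finite F" using FA fin finite_subset by blast
  define c where "c = (\<lambda>k i. case k of None \<Rightarrow> 1 | Some p \<Rightarrow> v i p)"
  have "card (UNIV :: 'p option set) < card F" using big by (simp add: F_def)
  from dependence[OF _ fF this, of c] obtain \<nu>0 where \<nu>0: "\<forall>i. i \<notin> F \<longrightarrow> \<nu>0 i = 0" "\<exists>i\<in>F. \<nu>0 i \<noteq> 0"
    "\<forall>k. (\<Sum>i\<in>F. \<nu>0 i * c k i) = 0" by auto
  define \<nu> where "\<nu> = (if \<exists>i. \<nu>0 i > 0 then \<nu>0 else (\<lambda>i. - \<nu>0 i))"
  have \<nu>out: "\<forall>i. i \<notin> F \<longrightarrow> \<nu> i = 0" using \<nu>0(1) by (simp add: \<nu>_def)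
  have \<nu>pos: "\<exists>i\<in>F. \<nu> i > 0"
  proof (cases "\<exists>i. \<nu>0 i > 0")
    case True then show ?thesis using \<nu>0(1) by (auto simp: \<nu>_def)
  next
    case False then show ?thesis using \<nu>0(2) by (auto simp: \<nu>_def) (metis linorder_neqE_linordered_idom)
  qed
  have \<nu>eq: "(\<Sum>i\<in>F. \<nu> i * c k i) = 0" for k
    using \<nu>0(3)[rule_format, of k] by (auto simp: \<nu>_def sum_negf)
  have \<nu>A: "(\<Sum>i\<in>A. \<nu> i * c k i) = 0" for k
  proof -
    have "(\<Sum>i\<in>A. \<nu> i * c k i) = (\<Sum>i\<in>F. \<nu> i * c k i)"
      by (rule sum.mono_neutral_right[OF fin FA]) (use \<nu>out in auto)
    then show ?thesis using \<nu>eq by simp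
  qed
  define rt where "rt = (\<lambda>i. if \<nu> i > 0 then (1 - \<mu> i) / \<nu> i else \<mu> i / (- \<nu> i))"
  define TT where "TT = rt ` {i\<in>F. \<nu> i \<noteq> 0}"
  have fTT: "finite TT" using fF by (simp add: TT_def)
  have neTT: "TT \<noteq> {}" using \<nu>pos by (auto simp: TT_def)
  define t where "t = Min TT"
  have tle: "t \<le> rt i" if "i \<in> F" "\<nu> i \<noteq> 0" for i
    unfolding t_def using that fTT by (auto simp: TT_def intro!: Min_le)
  obtain i0 where i0: "i0 \<in> F" "\<nu> i0 \<noteq> 0" "t = rt i0"
    using Min_in[OF fTT neTT] by (auto simp: TT_def t_def)
  have muF: "0 < \<mu> i \<and> \<mu> i < 1" if "i \<in> F" for i using that by (auto simp: F_def fracs_def)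
  define \<mu>' where "\<mu>' = (\<lambda>i. \<mu> i + t * \<nu> i)"
  have tpos: "t > 0" using i0 muF[OF i0(1)] by (auto simp: rt_def divide_pos_neg)
  have box: "0 \<le> \<mu>' i \<and> \<mu>' i \<le> 1" if "i \<in> A" for i
  proof (cases "i \<in> F \<and> \<nu> i \<noteq> 0")
    case True
    then have m: "0 < \<mu> i" "\<mu> i < 1" and tl: "t \<le> rt i" using muF tle by auto
    show ?thesis
    proof (cases "\<nu> i > 0")
      case True
      then have "t * \<nu> i \<le> 1 - \<mu> i" using tl by (simp add: rt_def pos_le_divide_eq)
      moreover have "0 \<le> t * \<nu> i" using True tpos by simp
      ultimately show ?thesis using m by (simp add: \<mu>'_def)
    next
      case False
      then have neg: "\<nu> i < 0" using \<open>i \<in> F \<and> \<nu> i \<noteq> 0\<close> by simp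
      have "t \<le> \<mu> i / (- \<nu> i)" using tl neg by (simp add: rt_def)
      then have "t * (- \<nu> i) \<le> \<mu> i" using neg pos_le_divide_eq[of "- \<nu> i" t "\<mu> i"] by simp
      moreover have "t * \<nu> i \<le> 0" using neg tpos by (simp add: mult_pos_neg less_imp_le)
      ultimately show ?thesis using m by (simp add: \<mu>'_def)
    qed
  next
    case False
    then have "\<nu> i = 0" using \<nu>out by auto
    then show ?thesis using fe that by (simp add: \<mu>'_def feas_def)
  qed
  have eqs: "(\<Sum>i\<in>A. \<mu>' i * v i p) = 0" for p
  proof -
    have "(\<Sum>i\<in>A. \<mu>' i * v i p) = (\<Sum>i\<in>A. \<mu> i * v i p) + t * (\<Sum>i\<in>A. \<nu> i * c (Some p) i)"
      by (simp add: \<mu>'_def c_def algebra_simps sum.distrib sum_distrib_left)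
    then show ?thesis using fe \<nu>A by (simp add: feas_def)
  qed
  have sm: "(\<Sum>i\<in>A. \<mu>' i) = s"
  proof -
    have "(\<Sum>i\<in>A. \<mu>' i) = (\<Sum>i\<in>A. \<mu> i) + t * (\<Sum>i\<in>A. \<nu> i * c None i)"
      by (simp add: \<mu>'_def c_def algebra_simps sum.distrib sum_distrib_left)
    then show ?thesis using fe \<nu>A by (simp add: feas_def)
  qed
  have "fracs A \<mu>' \<subseteq> F - {i0}"
  proof
    fix i assume i: "i \<in> fracs A \<mu>'"
    have "i \<in> F"
    proof (rule ccontr)
      assume "i \<notin> F"
      then have "\<nu> i = 0" using \<nu>out by auto
      then show False using i \<open>i \<notin> F\<close> by (auto simp: fracs_def F_def \<mu>'_def)
    qed
    moreover have "i \<noteq> i0"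
    proof
      assume "i = i0"
      have "\<mu>' i0 = 0 \<or> \<mu>' i0 = 1"
      proof (cases "\<nu> i0 > 0")
        case True then show ?thesis using i0 by (simp add: \<mu>'_def rt_def)
      next
        case False then show ?thesis using i0 by (simp add: \<mu>'_def rt_def)
      qed
      then show False using i \<open>i = i0\<close> by (auto simp: fracs_def)
    qed
    ultimately show "i \<in> F - {i0}" by simp
  qed
  then have "fracs A \<mu>' \<subset> F" using i0 by auto
  then have "card (fracs A \<mu>') < card F" using fF psubset_card_mono by blast
  moreover have "feas A v \<mu>' s" using box eqs sm by (simp add: feas_def)
  ultimately show ?thesis unfolding F_def by blast
qed

lemma vertex:
  fixes v :: "'i \<Rightarrow> 'p::finite \<Rightarrow> real"
  assumes fin: "finite A" and fe: "feas A v \<mu> s"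
  shows "\<exists>\<mu>'. feas A v \<mu>' s \<and> card (fracs A \<mu>') \<le> CARD('p) + 1"
  using fe
proof (induct "card (fracs A \<mu>)" arbitrary: \<mu> rule: less_induct)
  case less
  show ?case
  proof (cases "card (fracs A \<mu>) \<le> CARD('p) + 1")
    case True then show ?thesis using less by blast
  next
    case False
    then obtain \<mu>' where "feas A v \<mu>' s" "card (fracs A \<mu>') < card (fracs A \<mu>)"
      using vertex_step[OF fin less(2)] by force
    then show ?thesis using less(1) by blast
  qed
qed

definition goodS :: "'i set \<Rightarrow> ('i \<Rightarrow> 'p::finite \<Rightarrow> real) \<Rightarrow> bool" where
  "goodS A v \<longleftrightarrow> card A \<le> CARD('p) \<or> (\<exists>lam. feas A v lam (real (card A) - real CARD('p)))"

lemma goodS_init: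
  fixes v :: "'i \<Rightarrow> 'p::finite \<Rightarrow> real"
  assumes "finite I" "\<forall>p. (\<Sum>i\<in>I. v i p) = 0"
  shows "goodS I v"
proof (cases "card I \<le> CARD('p)")
  case True then show ?thesis by (simp add: goodS_def)
next
  case False
  define k where "k = real (card I)"
  define d where "d = real CARD('p)"
  have kd: "d < k" using False by (simp add: k_def d_def)
  have d0: "0 \<le> d" by (simp add: d_def)
  define lam where "lam = (\<lambda>i::'i. (k - d) / k)"
  have "feas I v lam (k - d)"
    unfolding feas_def
  proof (intro conjI ballI allI)
    fix i show "0 \<le> lam i" using kd d0 by (simp add: lam_def)
    show "lam i \<le> 1" using kd d0 by (simp add: lam_def)
  next
    fix p have "(\<Sum>i\<in>I. lam i * v i p) = ((k-d)/k) * (\<Sum>i\<in>I. v i p)" by (simp add: lam_def sum_distrib_left)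
    then show "(\<Sum>i\<in>I. lam i * v i p) = 0" using assms by simp
  next
    show "sum lam I = k - d" using kd d0 by (simp add: lam_def k_def)
  qed
  then show ?thesis by (auto simp: goodS_def k_def d_def)
qed

lemma goodS_step:
  fixes v :: "'i \<Rightarrow> 'p::finite \<Rightarrow> real"
  assumes fin: "finite A" and ne: "A \<noteq> {}" and g: "goodS A v"
  shows "\<exists>i\<in>A. goodS (A - {i}) v"
proof (cases "card A \<le> CARD('p)")
  case True
  obtain i where "i \<in> A" using ne by blast
  then show ?thesis using True fin by (auto simp: goodS_def)
next
  case False
  then obtain lam where l: "feas A v lam (real (card A) - real CARD('p))" using g by (auto simp: goodS_def)
  define k where "k = real (card A)"
  define d where "d = real CARD('p)"
  have kd: "d + 1 \<le> k" using False by (simp add: k_def d_def)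
  have d0: "0 \<le> d" by (simp add: d_def)
  define r where "r = (k - d - 1) / (k - d)"
  have r01: "0 \<le> r" "r \<le> 1" using kd by (auto simp: r_def)
  have "feas A v (\<lambda>i. r * lam i) (k - d - 1)"
    unfolding feas_def
  proof (intro conjI ballI allI)
    fix i assume "i \<in> A"
    then have "0 \<le> lam i" "lam i \<le> 1" using l by (auto simp: feas_def)
    then show "0 \<le> r * lam i" "r * lam i \<le> 1" using r01 by (auto simp: mult_le_one)
  next
    fix p show "(\<Sum>i\<in>A. r * lam i * v i p) = 0"
      using l by (simp add: feas_def mult.assoc sum_distrib_left[symmetric])
  next
    have "(\<Sum>i\<in>A. r * lam i) = r * (k - d)" using l by (simp add: feas_def sum_distrib_left[symmetric] k_def d_def)
    then show "(\<Sum>i\<in>A. r * lam i) = k - d - 1" using kd by (simp add: r_def)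
  qed
  from vertex[OF fin this] obtain \<mu> where mu: "feas A v \<mu> (k - d - 1)" "card (fracs A \<mu>) \<le> CARD('p) + 1"
    by blast
  have "\<exists>i\<in>A. \<mu> i = 0"
  proof (rule ccontr)
    assume "\<not> ?thesis"
    then have pos: "\<forall>i\<in>A. 0 < \<mu> i" using mu(1) by (force simp: feas_def)
    define On where "On = {i\<in>A. \<mu> i = 1}"
    define F where "F = fracs A \<mu>"
    have AOF: "A = On \<union> F" "On \<inter> F = {}" using pos mu(1) by (auto simp: On_def F_def fracs_def feas_def)
    have fO: "finite On" "finite F" using fin AOF by (metis finite_Un)+
    have "(\<Sum>i\<in>A. \<mu> i) = (\<Sum>i\<in>On. \<mu> i) + (\<Sum>i\<in>F. \<mu> i)" using AOF fO by (simp add: sum.union_disjoint)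
    also have "(\<Sum>i\<in>On. \<mu> i) = real (card On)" by (simp add: On_def)
    finally have eq: "k - d - 1 = real (card On) + (\<Sum>i\<in>F. \<mu> i)" using mu(1) by (simp add: feas_def)
    have cA: "card A = card On + card F" using AOF fO card_Un_disjoint by metis
    show False
    proof (cases "F = {}")
      case True
      then show False using eq cA d0 by (simp add: k_def)
    next
      case False
      have "0 < (\<Sum>i\<in>F. \<mu> i)" using False fO pos AOF by (intro sum_pos) auto
      moreover have "real (card F) \<le> d + 1" using mu(2) by (simp add: F_def d_def)
      ultimately show False using eq cA by (simp add: k_def)
    qed
  qed
  then obtain i where i: "i \<in> A" "\<mu> i = 0" by blast
  have sA: "(\<Sum>j\<in>A - {i}. f j) = (\<Sum>j\<in>A. f j)" if "f i = 0" for f :: "'i \<Rightarrow> real"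
    using sum.remove[OF fin i(1), of f] that by simp
  have "feas (A - {i}) v \<mu> (real (card (A - {i})) - real CARD('p))"
    using mu(1) i fin unfolding feas_def
    apply (intro conjI)
    subgoal by auto
    subgoal by (subst sA) (auto simp: i)
    subgoal using kd by (subst sA) (auto simp: i k_def d_def card_Diff_singleton)
    done
  then show ?thesis using i by (auto simp: goodS_def)
qed

lemma goodS_bound:
  fixes v :: "'i \<Rightarrow> 'p::finite \<Rightarrow> real"
  assumes fin: "finite A" and g: "goodS A v" and M: "0 \<le> M" and bd: "\<forall>i\<in>A. \<forall>p. \<bar>v i p\<bar> \<le> M"
  shows "\<bar>\<Sum>i\<in>A. v i p\<bar> \<le> real CARD('p) * M"
proof (cases "card A \<le> CARD('p)")
  case True
  have "\<bar>\<Sum>i\<in>A. v i p\<bar> \<le> (\<Sum>i\<in>A. \<bar>v i p\<bar>)" by (rule sum_abs)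
  also have "\<dots> \<le> (\<Sum>i\<in>A. M)" using bd by (intro sum_mono) auto
  also have "\<dots> = real (card A) * M" by simp
  also have "\<dots> \<le> real CARD('p) * M" using True M by (intro mult_right_mono) auto
  finally show ?thesis .
next
  case False
  then obtain lam where l: "feas A v lam (real (card A) - real CARD('p))" using g by (auto simp: goodS_def)
  have "(\<Sum>i\<in>A. v i p) = (\<Sum>i\<in>A. v i p) - (\<Sum>i\<in>A. lam i * v i p)" using l by (simp add: feas_def)
  also have "\<dots> = (\<Sum>i\<in>A. (1 - lam i) * v i p)" by (simp add: sum_subtractf algebra_simps)
  finally have "\<bar>\<Sum>i\<in>A. v i p\<bar> = \<bar>\<Sum>i\<in>A. (1 - lam i) * v i p\<bar>" by simp
  also have "\<dots> \<le> (\<Sum>i\<in>A. \<bar>(1 - lam i) * v i p\<bar>)" by (rule sum_abs)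
  also have "\<dots> \<le> (\<Sum>i\<in>A. (1 - lam i) * M)"
  proof (rule sum_mono)
    fix i assume "i \<in> A"
    then have "0 \<le> 1 - lam i" "\<bar>v i p\<bar> \<le> M" using l bd by (auto simp: feas_def)
    then show "\<bar>(1 - lam i) * v i p\<bar> \<le> (1 - lam i) * M" by (simp add: abs_mult mult_left_mono)
  qed
  also have "\<dots> = (real (card A) - (\<Sum>i\<in>A. lam i)) * M" by (simp add: sum_distrib_right[symmetric] sum_subtractf)
  also have "\<dots> = real CARD('p) * M" using l by (simp add: feas_def)
  finally show ?thesis .
qed

definition nxt :: "('i \<Rightarrow> 'p::finite \<Rightarrow> real) \<Rightarrow> 'i set \<Rightarrow> 'i" where
  "nxt v A = (SOME i. i \<in> A \<and> goodS (A - {i}) v)"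

definition sq :: "('i \<Rightarrow> 'p::finite \<Rightarrow> real) \<Rightarrow> 'i set \<Rightarrow> nat \<Rightarrow> 'i set" where
  "sq v I j = ((\<lambda>A. A - {nxt v A}) ^^ j) I"

lemma sq_props:
  fixes v :: "'i \<Rightarrow> 'p::finite \<Rightarrow> real"
  assumes "finite I" "goodS I v" "j \<le> card I"
  shows "goodS (sq v I j) v \<and> sq v I j \<subseteq> I \<and> card (sq v I j) = card I - j"
  using assms(3)
proof (induct j)
  case 0 then show ?case using assms by (simp add: sq_def)
next
  case (Suc j)
  let ?A = "sq v I j"
  have IH: "goodS ?A v" "?A \<subseteq> I" "card ?A = card I - j" using Suc by auto
  have fA: "finite ?A" using IH(2) assms(1) finite_subset by blast
  have ne: "?A \<noteq> {}" using IH(3) Suc(2) by auto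
  have ex: "\<exists>i. i \<in> ?A \<and> goodS (?A - {i}) v" using goodS_step[OF fA ne IH(1)] by blast
  have n: "nxt v ?A \<in> ?A \<and> goodS (?A - {nxt v ?A}) v"
    unfolding nxt_def by (rule someI_ex[OF ex])
  have eq: "sq v I (Suc j) = ?A - {nxt v ?A}" by (simp add: sq_def)
  show ?case unfolding eq using n IH fA Suc(2) by (auto simp: card_Diff_singleton)
qed

lemma sq_mono: "sq v I (j + m) \<subseteq> sq v I j"
  by (induct m) (auto simp: sq_def)

lemma card_box:
  fixes c :: int
  assumes "0 \<le> c"
  shows "card {x :: 'p::finite \<Rightarrow> int. \<forall>p. \<bar>x p\<bar> \<le> c} = nat (2*c+1) ^ CARD('p)"
proof -
  have "{x :: 'p \<Rightarrow> int. \<forall>p. \<bar>x p\<bar> \<le> c} = PiE UNIV (\<lambda>_. {-c..c})"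
  proof (rule set_eqI)
    fix x :: "'p \<Rightarrow> int"
    have "(\<forall>p. \<bar>x p\<bar> \<le> c) \<longleftrightarrow> (\<forall>p. x p \<in> {-c..c})" by (auto simp: abs_le_iff minus_le_iff)
    then show "x \<in> {x. \<forall>p. \<bar>x p\<bar> \<le> c} \<longleftrightarrow> x \<in> PiE UNIV (\<lambda>_. {-c..c})"
      by (simp add: PiE_def extensional_def Pi_def)
  qed
  then show ?thesis using assms by (simp add: card_PiE)
qed

lemma zs_extract:
  fixes v :: "'i \<Rightarrow> 'p::finite \<Rightarrow> int" and M :: int
  assumes fin: "finite I" and ne: "I \<noteq> {}" and zs: "\<forall>p. (\<Sum>i\<in>I. v i p) = 0"
    and M: "0 \<le> M" and bd: "\<forall>i\<in>I. \<forall>p. \<bar>v i p\<bar> \<le> M"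
  shows "\<exists>B\<subseteq>I. B \<noteq> {} \<and> card B \<le> nat (2 * int CARD('p) * M + 1) ^ CARD('p) \<and> (\<forall>p. (\<Sum>i\<in>B. v i p) = 0)"
proof -
  define K where "K = nat (2 * int CARD('p) * M + 1) ^ CARD('p)"
  show ?thesis
  proof (cases "card I \<le> K")
    case True then show ?thesis using ne zs unfolding K_def by blast
  next
    case False
    define vr where "vr = (\<lambda>i p. real_of_int (v i p))"
    have zr: "\<forall>p. (\<Sum>i\<in>I. vr i p) = 0" using zs by (simp add: vr_def flip: of_int_sum)
    have gI: "goodS I vr" by (rule goodS_init[OF fin zr])
    define f where "f = (\<lambda>j p. \<Sum>i\<in>sq vr I j. v i p)"
    define Bx where "Bx = {x :: 'p \<Rightarrow> int. \<forall>p. \<bar>x p\<bar> \<le> int CARD('p) * M}"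
    have cBx: "card Bx = K" unfolding Bx_def K_def using M
      by (subst card_box) (auto simp: algebra_simps)
    have fBx: "finite Bx"
    proof -
      have "K > 0" unfolding K_def using M by simp
      then show ?thesis using cBx card_gt_0_iff by blast
    qed
    have fin_into: "f ` {0..K} \<subseteq> Bx"
    proof
      fix y assume "y \<in> f ` {0..K}"
      then obtain j where j: "j \<le> K" "y = f j" by auto
      have sp: "goodS (sq vr I j) vr" "sq vr I j \<subseteq> I" using sq_props[OF fin gI, of j] j False by auto
      have "\<bar>y p\<bar> \<le> int CARD('p) * M" for p
      proof -
        have "\<bar>\<Sum>i\<in>sq vr I j. vr i p\<bar> \<le> real CARD('p) * real_of_int M"
          using sp fin finite_subset bd M
          by (intro goodS_bound) (auto simp: vr_def subset_iff simp flip: of_int_abs)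
        then have "real_of_int \<bar>\<Sum>i\<in>sq vr I j. v i p\<bar> \<le> real_of_int (int CARD('p) * M)"
          by (simp add: vr_def flip: of_int_sum)
        then show ?thesis unfolding j f_def of_int_le_iff .
      qed
      then show "y \<in> Bx" by (simp add: Bx_def)
    qed
    have "\<not> inj_on f {0..K}"
    proof
      assume "inj_on f {0..K}"
      then have "card {0..K} \<le> card Bx" using card_inj_on_le[OF _ fin_into fBx] by blast
      then show False using cBx by simp
    qed
    then obtain j j' where jj: "j \<in> {0..K}" "j' \<in> {0..K}" "j \<noteq> j'" "f j = f j'"
      unfolding inj_on_def by blast
    obtain a b where ab: "a < b" "b \<le> K" "f a = f b"
      using jj by (metis atLeastAtMost_iff linorder_neqE_nat)
    define B where "B = sq vr I a - sq vr I b"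
    have sa: "sq vr I a \<subseteq> I" "card (sq vr I a) = card I - a" using sq_props[OF fin gI, of a] ab False by auto
    have sb: "sq vr I b \<subseteq> I" "card (sq vr I b) = card I - b" using sq_props[OF fin gI, of b] ab False by auto
    have sub: "sq vr I b \<subseteq> sq vr I a" using sq_mono[of vr I a "b - a"] ab by simp
    have fa: "finite (sq vr I a)" using sa fin finite_subset by blast
    have fb: "finite (sq vr I b)" using sb fin finite_subset by blast
    have cB: "card B = b - a" unfolding B_def using card_Diff_subset[OF fb sub] sa sb ab False by simp
    have "B \<subseteq> I" using sa by (auto simp: B_def)
    moreover have "B \<noteq> {}" using cB ab by auto
    moreover have "card B \<le> K" using cB ab by simp
    moreover have "(\<Sum>i\<in>B. v i p) = 0" for p
    proof -
      have "(\<Sum>i\<in>sq vr I a. v i p) = (\<Sum>i\<in>B. v i p) + (\<Sum>i\<in>sq vr I b. v i p)"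
        unfolding B_def using sum.subset_diff[OF sub fa] by simp
      moreover have "(\<Sum>i\<in>sq vr I a. v i p) = (\<Sum>i\<in>sq vr I b. v i p)" using ab(3) unfolding f_def by meson
      ultimately show ?thesis by simp
    qed
    ultimately show ?thesis unfolding K_def by blast
  qed
qed

lemma zs_partition:
  fixes v :: "'i \<Rightarrow> 'p::finite \<Rightarrow> int" and M :: int
  assumes fin: "finite I" and zs: "\<forall>p. (\<Sum>i\<in>I. v i p) = 0"
    and M: "0 \<le> M" and bd: "\<forall>i\<in>I. \<forall>p. \<bar>v i p\<bar> \<le> M"
  shows "\<exists>PP. finite PP \<and> \<Union>PP = I \<and> pairwise disjnt PP \<and>
     (\<forall>B\<in>PP. B \<noteq> {} \<and> card B \<le> nat (2 * int CARD('p) * M + 1) ^ CARD('p) \<and> (\<forall>p. (\<Sum>i\<in>B. v i p) = 0))"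
  using fin zs bd
proof (induct "card I" arbitrary: I rule: less_induct)
  case less
  show ?case
  proof (cases "I = {}")
    case True then show ?thesis by (intro exI[of _ "{}"]) auto
  next
    case False
    from zs_extract[OF less(2) False less(3) M less(4)] obtain B where
      B: "B \<subseteq> I" "B \<noteq> {}" "card B \<le> nat (2 * int CARD('p) * M + 1) ^ CARD('p)" "\<forall>p. (\<Sum>i\<in>B. v i p) = 0"
      by blast
    have fB: "finite B" using B(1) less(2) finite_subset by blast
    have lt: "card (I - B) < card I"
    proof -
      have "card B > 0" using B(2) fB by (simp add: card_gt_0_iff)
      moreover have "card B \<le> card I" using B(1) less(2) by (simp add: card_mono)
      ultimately show ?thesis using card_Diff_subset[OF fB B(1)] by simp
    qed
    have z2: "\<forall>p. (\<Sum>i\<in>I - B. v i p) = 0"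
    proof
      fix p show "(\<Sum>i\<in>I - B. v i p) = 0"
        using B(4) less(3) sum.subset_diff[OF B(1) less(2), of "\<lambda>i. v i p"] by simp
    qed
    from less(1)[OF lt _ z2] less(2,4) obtain PP where PP: "finite PP" "\<Union>PP = I - B" "pairwise disjnt PP"
      "\<forall>B\<in>PP. B \<noteq> {} \<and> card B \<le> nat (2 * int CARD('p) * M + 1) ^ CARD('p) \<and> (\<forall>p. (\<Sum>i\<in>B. v i p) = 0)"
      by auto
    have "pairwise disjnt (insert B PP)"
      using PP(2,3) by (auto simp: pairwise_def disjnt_def)
    moreover have "\<Union>(insert B PP) = I" using PP(2) B(1) by auto
    ultimately show ?thesis using PP B by (intro exI[of _ "insert B PP"]) auto
  qed
qed

lemma is_path_append:
  "is_path S E s (xs @ ys) s' \<longleftrightarrow> (\<exists>m. is_path S E s xs m \<and> is_path S E m ys s')"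
proof (induct xs arbitrary: s)
  case Nil
  have "is_path S E s ys s' \<Longrightarrow> s \<in> S" by (cases ys) auto
  then show ?case by auto
next
  case (Cons e xs) then show ?case by auto
qed

lemma is_path_in: "is_path S E s xs s' \<Longrightarrow> s \<in> S \<and> s' \<in> S \<and> set xs \<subseteq> E"
  by (induct xs arbitrary: s) auto

lemma is_path_det: "is_path S E s xs m \<Longrightarrow> is_path S E s xs m' \<Longrightarrow> m = m'"
  by (induct xs arbitrary: s) auto

lemma closed_decomp:
  assumes fS: "finite S"
  shows "is_path S E s c s \<Longrightarrow> \<exists>cs. (\<forall>c'\<in>set cs. is_cycle S E c' \<and> length c' \<le> card S) \<and> mset (concat cs) = mset c"
proof (induct "length c" arbitrary: c rule: less_induct)
  case less
  show ?case
  proof (cases "length c \<le> card S")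
    case True then show ?thesis using less(2) by (intro exI[of _ "[c]"]) (auto simp: is_cycle_def)
  next
    case False
    define st where "st = (\<lambda>i. SOME m. is_path S E s (take i c) m \<and> is_path S E m (drop i c) s)"
    have st: "is_path S E s (take i c) (st i) \<and> is_path S E (st i) (drop i c) s" for i
    proof -
      have "\<exists>m. is_path S E s (take i c) m \<and> is_path S E m (drop i c) s"
        using less(2) is_path_append[of S E s "take i c" "drop i c" s] by simp
      then show ?thesis unfolding st_def by (rule someI_ex)
    qed
    have stS: "st ` {0..card S} \<subseteq> S"
    proof
      fix x assume "x \<in> st ` {0..card S}"
      then obtain i where "x = st i" by auto
      then show "x \<in> S" using is_path_in[OF conjunct1[OF st[of i]]] by simp
    qed
    have "\<not> inj_on st {0..card S}"
    proof
      assume "inj_on st {0..card S}"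
      then have "card {0..card S} \<le> card S" using card_inj_on_le[OF _ stS fS] by blast
      then show False by simp
    qed
    then obtain a b where ab: "a < b" "b \<le> card S" "st a = st b"
      unfolding inj_on_def by (metis atLeastAtMost_iff linorder_neqE_nat)
    define c1 where "c1 = take a c"
    define c2 where "c2 = take (b - a) (drop a c)"
    define c3 where "c3 = drop b c"
    have tb: "take b c = c1 @ c2" unfolding c1_def c2_def using ab take_add[of a "b - a" c] by simp
    have cc: "c = c1 @ c2 @ c3" using tb append_take_drop_id[of b c] by (simp add: c3_def)
    have p1: "is_path S E s c1 (st a)" using st[of a] by (simp add: c1_def)
    from st[of b] obtain m where m: "is_path S E s c1 m" "is_path S E m c2 (st b)"
      unfolding tb is_path_append by blast
    have "m = st a" using is_path_det[OF m(1) p1] .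
    then have p2: "is_path S E (st a) c2 (st a)" using m(2) ab(3) by simp
    have p3: "is_path S E (st a) c3 s" using st[of b] ab(3) by (simp add: c3_def)
    have p13: "is_path S E s (c1 @ c3) s" unfolding is_path_append using p1 p3 by blast
    have lc: "length (c1 @ c3) < length c" using ab False by (simp add: c1_def c3_def)
    from less(1)[OF lc p13] obtain cs where cs: "\<forall>c'\<in>set cs. is_cycle S E c' \<and> length c' \<le> card S"
      "mset (concat cs) = mset (c1 @ c3)" by blast
    have "is_cycle S E c2" using p2 by (auto simp: is_cycle_def)
    moreover have "length c2 \<le> card S" using ab by (simp add: c2_def)
    moreover have "mset (concat (c2 # cs)) = mset c" using cs(2) cc by simp
    ultimately show ?thesis using cs(1) by (intro exI[of _ "c2 # cs"]) auto
  qed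
qed

lemma mc_decomp:
  assumes fS: "finite S" and mc: "is_multicycle S E \<Theta>"
  shows "\<exists>cs. (\<forall>c'\<in>set cs. is_cycle S E c' \<and> length c' \<le> card S) \<and> mset (concat cs) = mset (concat \<Theta>)"
  using mc
proof (induct \<Theta>)
  case Nil then show ?case by (intro exI[of _ "[]"]) auto
next
  case (Cons \<theta> \<Theta>)
  then obtain cs where cs: "\<forall>c'\<in>set cs. is_cycle S E c' \<and> length c' \<le> card S" "mset (concat cs) = mset (concat \<Theta>)"
    by (auto simp: is_multicycle_def)
  from Cons(2) obtain s where "is_path S E s \<theta> s" by (auto simp: is_multicycle_def is_cycle_def)
  from closed_decomp[OF fS this] obtain ds where ds: "\<forall>c'\<in>set ds. is_cycle S E c' \<and> length c' \<le> card S"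
    "mset (concat ds) = mset \<theta>" by blast
  show ?case using cs ds by (intro exI[of _ "ds @ cs"]) auto
qed

lemma mc_parikh_concat: "mc_parikh \<Theta> e = count (mset (concat \<Theta>)) e"
  by (induct \<Theta>) (auto simp: mc_parikh_def count_mset)

lemma delta_mc_concat: "delta_mc \<Theta> p = (\<Sum>e\<leftarrow>concat \<Theta>. delta_edge e p)"
  by (induct \<Theta>) (auto simp: delta_mc_def delta_word_def)

lemma sum_list_mset_eq:
  fixes f :: "'a \<Rightarrow> 'b::comm_monoid_add"
  assumes h: "mset xs = mset ys" shows "sum_list (map f xs) = sum_list (map f ys)"
proof -
  have "sum_list (map f xs) = sum_mset (mset (map f xs))" by (simp only: sum_mset_sum_list)
  also have "\<dots> = sum_mset (mset (map f ys))" by (simp only: mset_map h)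
  also have "\<dots> = sum_list (map f ys)" by (simp only: sum_mset_sum_list)
  finally show ?thesis .
qed

lemma norm_inf_ge:
  assumes "finite T" "t \<in> T"
  shows "fst t p \<le> norm_inf T" "snd t p \<le> norm_inf T"
proof -
  have f1: "finite {fst t p | t p. t \<in> T}"
  proof -
    have "{fst t p | t p. t \<in> T} \<subseteq> (\<lambda>x. fst (fst x) (snd x)) ` (T \<times> UNIV)"
    proof
      fix y assume "y \<in> {fst t p | t p. t \<in> T}"
      then obtain t p where "t \<in> T" "y = fst t p" by blast
      then show "y \<in> (\<lambda>x. fst (fst x) (snd x)) ` (T \<times> UNIV)" by (intro rev_image_eqI[of "(t, p)"]) auto
    qed
    then show ?thesis by (rule finite_subset) (simp add: assms(1))
  qed
  have f2: "finite {snd t p | t p. t \<in> T}"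
  proof -
    have "{snd t p | t p. t \<in> T} \<subseteq> (\<lambda>x. snd (fst x) (snd x)) ` (T \<times> UNIV)"
    proof
      fix y assume "y \<in> {snd t p | t p. t \<in> T}"
      then obtain t p where "t \<in> T" "y = snd t p" by blast
      then show "y \<in> (\<lambda>x. snd (fst x) (snd x)) ` (T \<times> UNIV)" by (intro rev_image_eqI[of "(t, p)"]) auto
    qed
    then show ?thesis by (rule finite_subset) (simp add: assms(1))
  qed
  have mfst: "fst t p \<in> {fst t p | t p. t \<in> T}" using assms(2) by blast
  show "fst t p \<le> norm_inf T" unfolding norm_inf_def
    apply (rule Max_ge)
    subgoal by (intro finite_UnI finite.insertI finite.emptyI f1 f2)
    subgoal using mfst by blast
    done
  have msnd: "snd t p \<in> {snd t p | t p. t \<in> T}" using assms(2) by blast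
  show "snd t p \<le> norm_inf T" unfolding norm_inf_def
    apply (rule Max_ge)
    subgoal by (intro finite_UnI finite.insertI finite.emptyI f1 f2)
    subgoal using msnd by blast
    done
qed

lemma delta_edge_bound:
  assumes "finite T" "E \<subseteq> S \<times> T \<times> S" "e \<in> E"
  shows "\<bar>delta_edge e p\<bar> \<le> int (norm_inf T)"
proof -
  have t: "fst (snd e) \<in> T" using assms by auto
  show ?thesis using norm_inf_ge[OF assms(1) t, of p]
    by (simp add: delta_edge_def delta_trans_def)
qed

lemma delta_word_bound:
  assumes "finite T" "E \<subseteq> S \<times> T \<times> S" "set c \<subseteq> E"
  shows "\<bar>delta_word c p\<bar> \<le> int (length c * norm_inf T)"
  using assms(3)
proof (induct c)
  case Nil then show ?case by (simp add: delta_word_def)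
next
  case (Cons e c)
  have "\<bar>delta_word (e # c) p\<bar> \<le> \<bar>delta_edge e p\<bar> + \<bar>delta_word c p\<bar>"
    by (simp add: delta_word_def abs_triangle_ineq)
  also have "\<dots> \<le> int (norm_inf T) + int (length c * norm_inf T)"
    using Cons delta_edge_bound[OF assms(1,2), of e p] by (intro add_mono) auto
  finally show ?case by simp
qed

lemma count_list_le_len: "count_list c e \<le> length c"
  by (induct c) auto

lemma sum_list_map_nth: "sum_list (map f xs) = (\<Sum>i<length xs. f (xs ! i))"
  by (simp add: sum_list_sum_nth atLeast0LessThan)

lemma arith_bound:
  fixes d M :: nat
  assumes "1 \<le> d" "1 \<le> M"
  shows "(2 * d * M + 1) ^ d * M \<le> (1 + 2 * M) ^ (d * (d + 1))"
proof -
  define n where "n = 1 + 2 * M"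
  have n3: "3 \<le> n" using assms by (simp add: n_def)
  have "d - 1 < 2 ^ (d - 1)" by (rule less_exp)
  then have "d \<le> 2 ^ (d - 1)" using assms(1) by linarith
  also have "\<dots> \<le> n ^ (d - 1)" using n3 by (intro power_mono) auto
  finally have dn: "d \<le> n ^ (d - 1)" .
  have "2 * d * M + 1 \<le> d * n" using assms by (simp add: n_def algebra_simps)
  also have "\<dots> \<le> n ^ (d - 1) * n" using dn by simp
  also have "\<dots> = n ^ d"
  proof (cases d)
    case 0 then show ?thesis using assms by simp
  next
    case (Suc d') then show ?thesis by (simp add: power_Suc2)
  qed
  finally have a: "2 * d * M + 1 \<le> n ^ d" .
  have "(2 * d * M + 1) ^ d * M \<le> (n ^ d) ^ d * n"
    using a by (intro mult_le_mono power_mono) (auto simp: n_def)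
  also have "\<dots> = n ^ (d * d + 1)" by (simp add: power_mult power_add)
  also have "\<dots> \<le> n ^ (d * (d + 1))" using n3 assms by (intro power_increasing) (auto simp: algebra_simps)
  finally show ?thesis by (simp add: n_def)
qed

lemma sum_Inl_Inr:
  assumes "finite A" "finite B"
  shows "(\<Sum>x\<in>Inl ` A \<union> Inr ` B. g x) = (\<Sum>a\<in>A. g (Inl a)) + (\<Sum>b\<in>B. g (Inr b))"
proof -
  have "(\<Sum>x\<in>Inl ` A \<union> Inr ` B. g x) = (\<Sum>x\<in>Inl ` A. g x) + (\<Sum>x\<in>Inr ` B. g x)"
    using assms by (intro sum.union_disjoint) auto
  also have "\<dots> = (\<Sum>a\<in>A. g (Inl a)) + (\<Sum>b\<in>B. g (Inr b))"
    by (simp add: sum.reindex)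
  finally show ?thesis .
qed

lemma split_sumset: "C = Inl ` (Inl -` C) \<union> Inr ` (Inr -` C)"
proof (rule set_eqI)
  fix x show "x \<in> C \<longleftrightarrow> x \<in> Inl ` (Inl -` C) \<union> Inr ` (Inr -` C)" by (cases x) auto
qed

lemma sum_split_sumset:
  assumes "finite C"
  shows "(\<Sum>x\<in>C. g x) = (\<Sum>a\<in>Inl -` C. g (Inl a)) + (\<Sum>b\<in>Inr -` C. g (Inr b))"
proof -
  have f: "finite (Inl -` C)" "finite (Inr -` C)" using assms by (auto intro: finite_vimageI)
  have "(\<Sum>x\<in>C. g x) = (\<Sum>x\<in>Inl ` (Inl -` C) \<union> Inr ` (Inr -` C). g x)" using split_sumset[of C] by simp
  then show ?thesis using sum_Inl_Inr[OF f] by simp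
qed

lemma sum_blocks:
  assumes "finite G" "\<forall>B\<in>G. finite B" "pairwise disjnt G"
  shows "(\<Sum>i\<in>(\<Union>B\<in>G. Inl -` B). f i) = (\<Sum>B\<in>G. \<Sum>i\<in>Inl -` B. f i)"
proof (rule sum.UNION_disjoint)
  show "finite G" by fact
  show "\<forall>B\<in>G. finite (Inl -` B)" using assms(2) by (auto intro: finite_vimageI)
  show "\<forall>B\<in>G. \<forall>B'\<in>G. B \<noteq> B' \<longrightarrow> Inl -` B \<inter> Inl -` B' = {}"
    using assms(3) by (auto simp: pairwise_def disjnt_def)
qed

lemma good_exists:
  fixes f :: "'b \<Rightarrow> int"
  assumes "finite PP" "bad \<subseteq> PP" "(\<Sum>B\<in>PP. f B) \<ge> k" "\<forall>B\<in>bad. f B \<le> X" "int (card bad) * X < k"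
  shows "\<exists>B\<in>PP - bad. f B > 0"
proof (rule ccontr)
  assume "\<not> ?thesis"
  then have "\<forall>B\<in>PP - bad. f B \<le> 0" by (meson not_less)
  then have "(\<Sum>B\<in>PP - bad. f B) \<le> 0" by (intro sum_nonpos) auto
  moreover have "(\<Sum>B\<in>bad. f B) \<le> (\<Sum>B\<in>bad. X)" using assms(4) by (intro sum_mono) auto
  moreover have "(\<Sum>B\<in>PP. f B) = (\<Sum>B\<in>PP - bad. f B) + (\<Sum>B\<in>bad. f B)"
    using sum.subset_diff[OF assms(2,1)] by simp
  ultimately show False using assms(3,5) by simp
qed

lemma sum_neg_one:
  fixes f :: "'b \<Rightarrow> int"
  assumes "finite G" "b \<in> G" "f b < 0" "\<forall>x\<in>G. f x \<le> 0"
  shows "sum f G < 0"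
proof -
  have "sum f G = f b + sum f (G - {b})" using sum.remove[OF assms(1,2)] .
  moreover have "sum f (G - {b}) \<le> 0" using assms(4) by (intro sum_nonpos) auto
  ultimately show ?thesis using assms(3) by simp
qed

theorem lemma7p3:
  fixes S :: "'s set" and T :: "'p::finite transition set" and E :: "('s, 'p) edge set"
    and \<Theta> :: "('s, 'p) edge list list" and Q :: "'p set" and k :: nat
  assumes "petri_cs S T E"
    and "norm_inf T > 0"
    and "is_multicycle S E \<Theta>"
    and "int k > norm1_restr (delta_mc \<Theta>) Q
                  * (1 + 2 * int (card S) * int (norm_inf T)) ^ (CARD('p) * (CARD('p) + 1))"
  shows "\<exists>\<Theta>'. is_multicycle S E \<Theta>' \<and>
    (\<forall>p. (delta_mc \<Theta> p \<le> 0 \<longrightarrow> delta_mc \<Theta>' p \<le> 0) \<and>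
         (delta_mc \<Theta> p \<le> - int k \<longrightarrow> delta_mc \<Theta>' p < 0) \<and>
         (delta_mc \<Theta> p \<ge> 0 \<longrightarrow> delta_mc \<Theta>' p \<ge> 0) \<and>
         (delta_mc \<Theta> p \<ge> int k \<longrightarrow> delta_mc \<Theta>' p > 0)) \<and>
    (\<forall>q\<in>Q. delta_mc \<Theta>' q = 0) \<and>
    (\<forall>e\<in>E. mc_parikh \<Theta> e \<ge> k \<longrightarrow> mc_parikh \<Theta>' e > 0) \<and>
    mc_length \<Theta>' \<le> (card E + CARD('p)) * (1 + 2 * card S * norm_inf T) ^ (CARD('p) * (CARD('p) + 1))"
proof -
  have fS: "finite S" and Sne: "S \<noteq> {}" and fT: "finite T" and ES: "E \<subseteq> S \<times> T \<times> S"
    using assms(1) by (auto simp: petri_cs_def)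
  have fE: "finite E"
  proof -
    have "finite (S \<times> T \<times> S)" using fS fT by simp
    then show ?thesis using ES by (rule finite_subset[rotated])
  qed
  define d where "d = CARD('p)"
  define N0 where "N0 = norm_inf T"
  define Mn where "Mn = card S * N0"
  define X where "X = (1 + 2 * card S * norm_inf T) ^ (CARD('p) * (CARD('p) + 1))"
  define K where "K = nat (2 * int CARD('p) * int Mn + 1) ^ CARD('p)"
  have d1: "1 \<le> d" unfolding d_def using finite_UNIV_card_ge_0[where 'a='p] by simp
  have cS: "1 \<le> card S" using fS Sne by (simp add: Suc_le_eq card_gt_0_iff)
  have N01: "1 \<le> N0" using assms(2) by (simp add: N0_def)
  have Mn1: "1 \<le> Mn" using cS N01 by (simp add: Mn_def)
  have SMn: "card S \<le> Mn" using N01 by (simp add: Mn_def)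
  have Keq: "K = (2 * d * Mn + 1) ^ d"
  proof -
    have "2 * int CARD('p) * int Mn + 1 = int (2 * d * Mn + 1)" by (simp add: d_def)
    then have "nat (2 * int CARD('p) * int Mn + 1) = 2 * d * Mn + 1" by (simp only: nat_int)
    then show ?thesis by (simp add: K_def d_def)
  qed
  have Xeq: "X = (1 + 2 * Mn) ^ (d * (d + 1))" by (simp add: X_def Mn_def N0_def d_def mult.assoc)
  have KX: "K * Mn \<le> X" unfolding Keq Xeq by (rule arith_bound[OF d1 Mn1])
  have KS: "K * card S \<le> X" using KX SMn by (meson le_trans mult_le_mono2)

  obtain cs where cs: "\<forall>c\<in>set cs. is_cycle S E c \<and> length c \<le> card S" "mset (concat cs) = mset (concat \<Theta>)"
    using mc_decomp[OF fS assms(3)] by blast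
  define N where "N = length cs"
  define s where "s = delta_mc \<Theta>"
  have cyc: "is_cycle S E (cs ! i) \<and> length (cs ! i) \<le> card S" if "i < N" for i
    using cs(1) that by (simp add: N_def)
  have cycE: "set (cs ! i) \<subseteq> E" if "i < N" for i
  proof -
    from cyc[OF that] obtain s0 where "is_path S E s0 (cs ! i) s0" by (auto simp: is_cycle_def)
    from is_path_in[OF this] show ?thesis by simp
  qed
  have s_eq: "s p = (\<Sum>i<N. delta_word (cs ! i) p)" for p
  proof -
    have "s p = (\<Sum>e\<leftarrow>concat \<Theta>. delta_edge e p)" by (simp add: s_def delta_mc_concat)
    also have "\<dots> = (\<Sum>e\<leftarrow>concat cs. delta_edge e p)" by (rule sum_list_mset_eq[OF cs(2), symmetric])
    also have "\<dots> = delta_mc cs p" by (simp add: delta_mc_concat)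
    also have "\<dots> = (\<Sum>i<N. delta_word (cs ! i) p)" by (simp add: delta_mc_def sum_list_map_nth N_def)
    finally show ?thesis .
  qed
  have par_eq: "mc_parikh \<Theta> e = (\<Sum>i<N. count_list (cs ! i) e)" for e
  proof -
    have "mc_parikh \<Theta> e = mc_parikh cs e" by (simp add: mc_parikh_concat cs(2))
    also have "\<dots> = (\<Sum>i<N. count_list (cs ! i) e)" by (simp add: mc_parikh_def sum_list_map_nth N_def)
    finally show ?thesis .
  qed

  define U where "U = Sigma (UNIV :: 'p set) (\<lambda>p. {..<nat \<bar>s p\<bar>})"
  define I where "I = Inl ` {..<N} \<union> Inr ` U"
  define v :: "nat + 'p \<times> nat \<Rightarrow> 'p \<Rightarrow> int" where "v = (\<lambda>x p. case x of Inl i \<Rightarrow> delta_word (cs ! i) p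
                        | Inr y \<Rightarrow> (if p = fst y then - sgn (s (fst y)) else (0::int)))"
  have fU: "finite U" by (simp add: U_def)
  have fI: "finite I" using fU by (simp add: I_def)
  have unit_sum: "(\<Sum>y\<in>W. v (Inr y) p) = - sgn (s p) * int (card {y\<in>W. fst y = p})" if "finite W" for W p
  proof -
    have "(\<Sum>y\<in>W. v (Inr y) p) = (\<Sum>y\<in>W. if fst y = p then - sgn (s p) else 0)"
      by (rule sum.cong) (auto simp: v_def)
    also have "\<dots> = (\<Sum>y\<in>{y\<in>W. fst y = p}. - sgn (s p))"
      using sum.inter_filter[OF that, of "\<lambda>y. - sgn (s p)" "\<lambda>y. fst y = p"] by simp
    also have "\<dots> = - sgn (s p) * int (card {y\<in>W. fst y = p})" by simp
    finally show ?thesis .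
  qed
  have cardUp: "card {y\<in>U. fst y = p} = nat \<bar>s p\<bar>" for p
  proof -
    have "{y\<in>U. fst y = p} = {p} \<times> {..<nat \<bar>s p\<bar>}" by (auto simp: U_def)
    then show ?thesis by (simp add: card_cartesian_product)
  qed
  have zsI: "\<forall>p. (\<Sum>x\<in>I. v x p) = 0"
  proof
    fix p
    have "(\<Sum>x\<in>I. v x p) = (\<Sum>i<N. v (Inl i) p) + (\<Sum>y\<in>U. v (Inr y) p)"
      unfolding I_def using fU by (intro sum_Inl_Inr) auto
    also have "(\<Sum>i<N. v (Inl i) p) = s p" by (simp add: v_def s_eq)
    also have "(\<Sum>y\<in>U. v (Inr y) p) = - sgn (s p) * \<bar>s p\<bar>" using unit_sum[OF fU] cardUp by simp
    finally show "(\<Sum>x\<in>I. v x p) = 0" by (simp add: sgn_mult_abs)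
  qed
  have bdI: "\<forall>x\<in>I. \<forall>p. \<bar>v x p\<bar> \<le> int Mn"
  proof (intro ballI allI)
    fix x p assume x: "x \<in> I"
    show "\<bar>v x p\<bar> \<le> int Mn"
    proof (cases x)
      case (Inl i)
      then have i: "i < N" using x by (auto simp: I_def)
      have "\<bar>delta_word (cs ! i) p\<bar> \<le> int (length (cs ! i) * norm_inf T)"
        by (rule delta_word_bound[OF fT ES cycE[OF i]])
      also have "\<dots> \<le> int Mn"
      proof -
        have "length (cs ! i) * norm_inf T \<le> Mn" using cyc[OF i] by (simp add: Mn_def N0_def)
        then show ?thesis by (simp only: of_nat_le_iff)
      qed
      finally show ?thesis using Inl by (simp add: v_def)
    next
      case (Inr y)
      have "\<bar>v x p\<bar> \<le> 1" using Inr by (auto simp: v_def abs_sgn_eq)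
      then show ?thesis using Mn1 by linarith
    qed
  qed
  obtain PP where PP: "finite PP" "\<Union>PP = I" "pairwise disjnt PP"
    "\<forall>B\<in>PP. B \<noteq> {} \<and> card B \<le> K \<and> (\<forall>p. (\<Sum>x\<in>B. v x p) = 0)"
    using zs_partition[OF fI zsI _ bdI] unfolding K_def by auto
  have BI: "B \<subseteq> I" if "B \<in> PP" for B using PP(2) that by blast
  have fB: "finite B" if "B \<in> PP" for B using BI[OF that] fI finite_subset by blast
  have cB_sub: "Inl -` B \<subseteq> {..<N}" if "B \<in> PP" for B using BI[OF that] by (auto simp: I_def)
  have wr_sub: "Inr -` B \<subseteq> U" if "B \<in> PP" for B using BI[OF that] by (auto simp: I_def)
  have card_cB: "card (Inl -` B) \<le> K" if "B \<in> PP" for B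
  proof -
    have e1: "card (Inl ` (Inl -` B) :: (nat + 'p \<times> nat) set) = card (Inl -` B)" by (rule card_image) simp
    have e2: "card (Inl ` (Inl -` B) :: (nat + 'p \<times> nat) set) \<le> card B" using fB[OF that] by (intro card_mono) auto
    have "card B \<le> K" using PP(4) that by blast
    then show ?thesis using e1 e2 by linarith
  qed
  define w :: "(nat + 'p \<times> nat) set \<Rightarrow> 'p \<Rightarrow> int" where "w = (\<lambda>B p. \<Sum>i\<in>Inl -` B. delta_word (cs ! i) p)"
  define cnt :: "(nat + 'p \<times> nat) set \<Rightarrow> 'p \<Rightarrow> nat" where "cnt = (\<lambda>B p. card {y \<in> Inr -` B. fst y = p})"
  have w_eq: "w B p = sgn (s p) * int (cnt B p)" if "B \<in> PP" for B p
  proof -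
    have fr: "finite (Inr -` B)" using fB[OF that] by (auto intro: finite_vimageI)
    have "0 = (\<Sum>x\<in>B. v x p)" using PP(4) that by auto
    also have "\<dots> = (\<Sum>i\<in>Inl -` B. v (Inl i) p) + (\<Sum>y\<in>Inr -` B. v (Inr y) p)"
      by (rule sum_split_sumset[OF fB[OF that]])
    also have "\<dots> = w B p - sgn (s p) * int (cnt B p)"
      using unit_sum[OF fr] by (simp add: w_def v_def cnt_def)
    finally show ?thesis by simp
  qed
  have w_sign: "(s p \<le> 0 \<longrightarrow> w B p \<le> 0) \<and> (0 \<le> s p \<longrightarrow> 0 \<le> w B p)" if "B \<in> PP" for B p
    using w_eq[OF that, of p] by (auto simp: sgn_if)
  have UI: "(\<Union>B\<in>PP. Inl -` B) = {..<N}" using PP(2) by (auto simp: I_def)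
  have sum_all: "(\<Sum>i<N. f i) = (\<Sum>B\<in>PP. \<Sum>i\<in>Inl -` B. f i)" for f :: "nat \<Rightarrow> int"
    using sum_blocks[OF PP(1) _ PP(3), of f] fB UI by simp
  have sum_all_nat: "(\<Sum>i<N. f i) = (\<Sum>B\<in>PP. \<Sum>i\<in>Inl -` B. f i)" for f :: "nat \<Rightarrow> nat"
    using sum_blocks[OF PP(1) _ PP(3), of f] fB UI by simp
  have s_blocks: "s p = (\<Sum>B\<in>PP. w B p)" for p
    unfolding s_eq w_def by (rule sum_all)
  have par_blocks: "int (mc_parikh \<Theta> e) = (\<Sum>B\<in>PP. int (\<Sum>i\<in>Inl -` B. count_list (cs ! i) e))" for e
    unfolding par_eq sum_all_nat by simp

  define bad where "bad = {B\<in>PP. \<exists>q\<in>Q. w B q \<noteq> 0}"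
  define norm1 where "norm1 = norm1_restr (delta_mc \<Theta>) Q"
  have bad_sub: "bad \<subseteq> PP" by (auto simp: bad_def)
  have card_bad: "int (card bad) \<le> norm1"
  proof -
    define QU where "QU = Sigma Q (\<lambda>q. {..<nat \<bar>s q\<bar>})"
    have fQ: "finite Q" by simp
    have "int (card QU) = (\<Sum>q\<in>Q. int (nat \<bar>s q\<bar>))" by (simp add: QU_def)
    also have "\<dots> = norm1" by (simp add: norm1_def norm1_restr_def s_def)
    finally have cQU: "int (card QU) = norm1" .
    have fQU: "finite QU" by (simp add: QU_def)
    define h :: "(nat + 'p \<times> nat) set \<Rightarrow> 'p \<times> nat" where "h = (\<lambda>B. SOME y. Inr y \<in> B \<and> fst y \<in> Q)"
    have h: "Inr (h B) \<in> B \<and> fst (h B) \<in> Q" if "B \<in> bad" for B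
    proof -
      from that obtain q where q: "q \<in> Q" "w B q \<noteq> 0" "B \<in> PP" by (auto simp: bad_def)
      then have "cnt B q \<noteq> 0" using w_eq[OF q(3), of q] by auto
      then have "{y \<in> Inr -` B. fst y = q} \<noteq> {}" unfolding cnt_def by (metis card.empty)
      then have "\<exists>y. Inr y \<in> B \<and> fst y \<in> Q" using q by auto
      then show ?thesis unfolding h_def by (rule someI_ex)
    qed
    have "h ` bad \<subseteq> QU"
    proof
      fix z assume "z \<in> h ` bad"
      then obtain B where B: "B \<in> bad" "z = h B" by auto
      have "z \<in> U" using h[OF B(1)] wr_sub[of B] B bad_sub by auto
      then show "z \<in> QU" using h[OF B(1)] B by (auto simp: U_def QU_def)
    qed
    moreover have "inj_on h bad"
    proof (rule inj_onI)
      fix B B' assume B: "B \<in> bad" "B' \<in> bad" "h B = h B'"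
      show "B = B'"
      proof (rule ccontr)
        assume "B \<noteq> B'"
        then have "disjnt B B'" using PP(3) B bad_sub unfolding pairwise_def by blast
        then show False using h[OF B(1)] h[OF B(2)] B(3) by (auto simp: disjnt_def)
      qed
    qed
    ultimately have "card bad \<le> card QU" using fQU by (intro card_inj_on_le)
    then show ?thesis using cQU by linarith
  qed
  define Xi where "Xi = int X"
  have Xi0: "0 \<le> Xi" by (simp add: Xi_def)
  have hk: "norm1 * Xi < int k" using assms(4) by (simp add: norm1_def Xi_def X_def)
  have norm1_0: "0 \<le> norm1" by (simp add: norm1_def norm1_restr_def sum_nonneg)
  have badX: "int (card bad) * Xi < int k"
  proof -
    have "int (card bad) * Xi \<le> norm1 * Xi" by (rule mult_right_mono[OF card_bad Xi0])
    then show ?thesis using hk by linarith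
  qed
  have k1: "1 \<le> k"
  proof -
    have "0 \<le> norm1 * Xi" using norm1_0 Xi0 by simp
    then show ?thesis using hk by linarith
  qed

  have cnt_bound: "int (\<Sum>i\<in>Inl -` B. count_list (cs ! i) e) \<le> Xi" if "B \<in> PP" for B e
  proof -
    have "(\<Sum>i\<in>Inl -` B. count_list (cs ! i) e) \<le> (\<Sum>i\<in>Inl -` B. card S)"
    proof (rule sum_mono)
      fix i assume "i \<in> Inl -` B"
      then have "i < N" using cB_sub[OF that] by auto
      then show "count_list (cs ! i) e \<le> card S" by (rule le_trans[OF count_list_le_len conjunct2[OF cyc]])
    qed
    also have "\<dots> = card (Inl -` B) * card S" by simp
    also have "\<dots> \<le> K * card S" using card_cB[OF that] by simp
    also have "\<dots> \<le> X" by (rule KS)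
    finally show ?thesis unfolding Xi_def by (simp only: of_nat_le_iff)
  qed
  have w_bound: "\<bar>w B p\<bar> \<le> Xi" if "B \<in> PP" for B p
  proof -
    have "\<bar>w B p\<bar> \<le> (\<Sum>i\<in>Inl -` B. \<bar>delta_word (cs ! i) p\<bar>)" unfolding w_def by (rule sum_abs)
    also have "\<dots> \<le> (\<Sum>i\<in>Inl -` B. int Mn)"
    proof (rule sum_mono)
      fix i assume "i \<in> Inl -` B"
      then have i: "i < N" using cB_sub[OF that] by auto
      have "\<bar>delta_word (cs ! i) p\<bar> \<le> int (length (cs ! i) * norm_inf T)"
        by (rule delta_word_bound[OF fT ES cycE[OF i]])
      also have "\<dots> \<le> int Mn"
      proof -
        have "length (cs ! i) * norm_inf T \<le> Mn" using cyc[OF i] by (simp add: Mn_def N0_def)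
        then show ?thesis by (simp only: of_nat_le_iff)
      qed
      finally show "\<bar>delta_word (cs ! i) p\<bar> \<le> int Mn" .
    qed
    also have "\<dots> = int (card (Inl -` B) * Mn)" by simp
    also have "\<dots> \<le> int (K * Mn)" using card_cB[OF that] by (simp only: of_nat_le_iff mult_le_mono1)
    also have "\<dots> \<le> Xi" using KX unfolding Xi_def by (simp only: of_nat_le_iff)
    finally show ?thesis .
  qed

  have edge_ex: "\<exists>B. B \<in> PP - bad \<and> (\<exists>i\<in>Inl -` B. 0 < count_list (cs ! i) e)"
    if "k \<le> mc_parikh \<Theta> e" for e
  proof -
    have "\<exists>B\<in>PP - bad. (\<lambda>B. int (\<Sum>i\<in>Inl -` B. count_list (cs ! i) e)) B > 0"
    proof (rule good_exists[OF PP(1) bad_sub _ _ badX])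
      show "int k \<le> (\<Sum>B\<in>PP. int (\<Sum>i\<in>Inl -` B. count_list (cs ! i) e))"
        using that par_blocks[of e] by simp
      show "\<forall>B\<in>bad. int (\<Sum>i\<in>Inl -` B. count_list (cs ! i) e) \<le> Xi" using cnt_bound[of _ e] bad_sub by blast
    qed
    then obtain B where B: "B \<in> PP - bad" "0 < int (\<Sum>i\<in>Inl -` B. count_list (cs ! i) e)" by blast
    have "0 < (\<Sum>i\<in>Inl -` B. count_list (cs ! i) e)" using B(2) by (simp only: of_nat_0_less_iff)
    then have "\<exists>i\<in>Inl -` B. 0 < count_list (cs ! i) e"
    proof (rule contrapos_pp)
      assume "\<not> (\<exists>i\<in>Inl -` B. 0 < count_list (cs ! i) e)"
      then have "\<forall>i\<in>Inl -` B. count_list (cs ! i) e = 0" by auto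
      then show "\<not> 0 < (\<Sum>i\<in>Inl -` B. count_list (cs ! i) e)" by simp
    qed
    then show ?thesis using B by blast
  qed
  have pos_ex: "\<exists>B. B \<in> PP - bad \<and> 0 < w B p" if "int k \<le> s p" for p
  proof -
    have "\<exists>B\<in>PP - bad. (\<lambda>B. w B p) B > 0"
    proof (rule good_exists[OF PP(1) bad_sub _ _ badX])
      show "int k \<le> (\<Sum>B\<in>PP. w B p)" using that s_blocks[of p] by simp
      show "\<forall>B\<in>bad. w B p \<le> Xi"
      proof
        fix B assume "B \<in> bad"
        then have "B \<in> PP" using bad_sub by blast
        then show "w B p \<le> Xi" using abs_le_D1[OF w_bound] by blast
      qed
    qed
    then show ?thesis by auto
  qed
  have neg_ex: "\<exists>B. B \<in> PP - bad \<and> w B p < 0" if "s p \<le> - int k" for p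
  proof -
    have "\<exists>B\<in>PP - bad. (\<lambda>B. - w B p) B > 0"
    proof (rule good_exists[OF PP(1) bad_sub _ _ badX])
      show "int k \<le> (\<Sum>B\<in>PP. - w B p)" using that s_blocks[of p] by (simp add: sum_negf)
      show "\<forall>B\<in>bad. - w B p \<le> Xi"
      proof
        fix B assume "B \<in> bad"
        then have "B \<in> PP" using bad_sub by blast
        then show "- w B p \<le> Xi" using abs_le_D2[OF w_bound] by blast
      qed
    qed
    then show ?thesis by auto
  qed

  define Ek where "Ek = {e\<in>E. k \<le> mc_parikh \<Theta> e}"
  define Pk where "Pk = {p. int k \<le> s p \<or> s p \<le> - int k}"
  define be where "be = (\<lambda>e. SOME B. B \<in> PP - bad \<and> (\<exists>i\<in>Inl -` B. 0 < count_list (cs ! i) e))"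
  define bp where "bp = (\<lambda>p. SOME B. B \<in> PP - bad \<and> (int k \<le> s p \<longrightarrow> 0 < w B p) \<and> (s p \<le> - int k \<longrightarrow> w B p < 0))"
  have be: "be e \<in> PP - bad \<and> (\<exists>i\<in>Inl -` (be e). 0 < count_list (cs ! i) e)" if "e \<in> Ek" for e
    unfolding be_def by (rule someI_ex) (use edge_ex that in \<open>auto simp: Ek_def\<close>)
  have bp: "bp p \<in> PP - bad \<and> (int k \<le> s p \<longrightarrow> 0 < w (bp p) p) \<and> (s p \<le> - int k \<longrightarrow> w (bp p) p < 0)"
    if "p \<in> Pk" for p
  proof -
    have "\<exists>B. B \<in> PP - bad \<and> (int k \<le> s p \<longrightarrow> 0 < w B p) \<and> (s p \<le> - int k \<longrightarrow> w B p < 0)"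
    proof (cases "int k \<le> s p")
      case True
      then show ?thesis using pos_ex[OF True] k1 by force
    next
      case False
      then have "s p \<le> - int k" using that by (simp add: Pk_def)
      then show ?thesis using neg_ex[of p] False by force
    qed
    then show ?thesis unfolding bp_def by (rule someI_ex)
  qed
  define G where "G = be ` Ek \<union> bp ` Pk"
  have G_sub: "G \<subseteq> PP - bad" using be bp by (auto simp: G_def)
  have fG: "finite G" using PP(1) G_sub finite_subset by blast
  have fEk: "finite Ek" using fE by (simp add: Ek_def)
  have cardG: "card G \<le> card E + d"
  proof -
    have "card G \<le> card (be ` Ek) + card (bp ` Pk)" by (simp add: G_def card_Un_le)
    also have "card (be ` Ek) \<le> card Ek" using fEk by (rule card_image_le)
    also have "card Ek \<le> card E" using fE by (intro card_mono) (auto simp: Ek_def)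
    also have "card (bp ` Pk) \<le> card Pk" by (rule card_image_le) simp
    also have "card Pk \<le> d" unfolding d_def by (rule card_mono) auto
    finally show ?thesis by simp
  qed
  define UG where "UG = (\<Union>B\<in>G. Inl -` B)"
  have UG_sub: "UG \<subseteq> {..<N}" using G_sub cB_sub by (auto simp: UG_def)
  have fUG: "finite UG" using UG_sub finite_subset by blast
  have pdG: "pairwise disjnt G" using PP(3) G_sub by (meson Diff_subset pairwise_subset subset_trans)
  have fBG: "\<forall>B\<in>G. finite B" using G_sub fB by blast
  have sumG: "(\<Sum>i\<in>UG. f i) = (\<Sum>B\<in>G. \<Sum>i\<in>Inl -` B. f i)" for f :: "nat \<Rightarrow> int"
    unfolding UG_def by (rule sum_blocks[OF fG fBG pdG])
  define \<Theta>' where "\<Theta>' = map (\<lambda>i. cs ! i) (sorted_list_of_set UG)"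
  have dist: "distinct (sorted_list_of_set UG)" "set (sorted_list_of_set UG) = UG" using fUG by auto
  have delta': "delta_mc \<Theta>' p = (\<Sum>B\<in>G. w B p)" for p
  proof -
    have "delta_mc \<Theta>' p = (\<Sum>i\<leftarrow>sorted_list_of_set UG. delta_word (cs ! i) p)"
      by (simp add: delta_mc_def \<Theta>'_def o_def)
    also have "\<dots> = (\<Sum>i\<in>UG. delta_word (cs ! i) p)" using dist by (simp add: sum_list_distinct_conv_sum_set)
    also have "\<dots> = (\<Sum>B\<in>G. w B p)" unfolding w_def by (rule sumG)
    finally show ?thesis .
  qed
  have parikh': "mc_parikh \<Theta>' e = (\<Sum>i\<in>UG. count_list (cs ! i) e)" for e
  proof -
    have "mc_parikh \<Theta>' e = (\<Sum>i\<leftarrow>sorted_list_of_set UG. count_list (cs ! i) e)"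
      by (simp add: mc_parikh_def \<Theta>'_def o_def)
    also have "\<dots> = (\<Sum>i\<in>UG. count_list (cs ! i) e)" using dist by (simp add: sum_list_distinct_conv_sum_set)
    finally show ?thesis .
  qed
  have length': "mc_length \<Theta>' = (\<Sum>i\<in>UG. length (cs ! i))"
  proof -
    have "mc_length \<Theta>' = (\<Sum>i\<leftarrow>sorted_list_of_set UG. length (cs ! i))"
      by (simp add: mc_length_def \<Theta>'_def o_def)
    also have "\<dots> = (\<Sum>i\<in>UG. length (cs ! i))" using dist by (simp add: sum_list_distinct_conv_sum_set)
    finally show ?thesis .
  qed

  have P1: "is_multicycle S E \<Theta>'"
    unfolding is_multicycle_def \<Theta>'_def using dist UG_sub cyc by auto
  have P2: "(delta_mc \<Theta> p \<le> 0 \<longrightarrow> delta_mc \<Theta>' p \<le> 0) \<and>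
         (delta_mc \<Theta> p \<le> - int k \<longrightarrow> delta_mc \<Theta>' p < 0) \<and>
         (delta_mc \<Theta> p \<ge> 0 \<longrightarrow> delta_mc \<Theta>' p \<ge> 0) \<and>
         (delta_mc \<Theta> p \<ge> int k \<longrightarrow> delta_mc \<Theta>' p > 0)" for p
  proof -
    have wG: "(s p \<le> 0 \<longrightarrow> w B p \<le> 0) \<and> (0 \<le> s p \<longrightarrow> 0 \<le> w B p)" if "B \<in> G" for B
      using w_sign G_sub that by blast
    have a: "s p \<le> 0 \<Longrightarrow> (\<Sum>B\<in>G. w B p) \<le> 0" using wG by (intro sum_nonpos) auto
    have c: "0 \<le> s p \<Longrightarrow> 0 \<le> (\<Sum>B\<in>G. w B p)" using wG by (intro sum_nonneg) auto
    have b: "(\<Sum>B\<in>G. w B p) < 0" if "s p \<le> - int k"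
    proof (rule sum_neg_one[OF fG])
      have "p \<in> Pk" using that by (simp add: Pk_def)
      then show "bp p \<in> G" "w (bp p) p < 0" using bp that by (auto simp: G_def)
      show "\<forall>x\<in>G. w x p \<le> 0" using wG that k1 by auto
    qed
    have dd: "(\<Sum>B\<in>G. w B p) > 0" if "int k \<le> s p"
    proof -
      have "(\<Sum>B\<in>G. - w B p) < 0"
      proof (rule sum_neg_one[OF fG])
        have "p \<in> Pk" using that by (simp add: Pk_def)
        then show "bp p \<in> G" "- w (bp p) p < 0" using bp that by (auto simp: G_def)
        show "\<forall>x\<in>G. - w x p \<le> 0" using wG that k1 by auto
      qed
      then show ?thesis by (simp add: sum_negf)
    qed
    show ?thesis using a b c dd delta'[of p] by (simp add: s_def)
  qed
  have P3: "\<forall>q\<in>Q. delta_mc \<Theta>' q = 0"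
  proof
    fix q assume q: "q \<in> Q"
    have "w B q = 0" if "B \<in> G" for B using G_sub that q by (auto simp: bad_def)
    then show "delta_mc \<Theta>' q = 0" using delta'[of q] by simp
  qed
  have P4: "\<forall>e\<in>E. mc_parikh \<Theta> e \<ge> k \<longrightarrow> mc_parikh \<Theta>' e > 0"
  proof (intro ballI impI)
    fix e assume e: "e \<in> E" "k \<le> mc_parikh \<Theta> e"
    then have "e \<in> Ek" by (simp add: Ek_def)
    from be[OF this] obtain i where i: "i \<in> Inl -` (be e)" "0 < count_list (cs ! i) e" by blast
    have "i \<in> UG" using i(1) \<open>e \<in> Ek\<close> by (auto simp: UG_def G_def)
    then have "count_list (cs ! i) e \<le> (\<Sum>i\<in>UG. count_list (cs ! i) e)" using fUG by (intro member_le_sum) auto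
    then show "0 < mc_parikh \<Theta>' e" using i(2) parikh'[of e] by simp
  qed
  have P5: "mc_length \<Theta>' \<le> (card E + CARD('p)) * (1 + 2 * card S * norm_inf T) ^ (CARD('p) * (CARD('p) + 1))"
  proof -
    have a: "mc_length \<Theta>' \<le> card UG * card S"
    proof -
      have "mc_length \<Theta>' \<le> (\<Sum>i\<in>UG. card S)" unfolding length' using UG_sub cyc by (intro sum_mono) auto
      then show ?thesis by simp
    qed
    have "card UG \<le> (\<Sum>B\<in>G. card (Inl -` B))" unfolding UG_def using fG by (rule card_UN_le)
    also have "\<dots> \<le> card G * K"
    proof -
      have "\<And>B. B \<in> G \<Longrightarrow> card (Inl -` B) \<le> K" using card_cB G_sub by blast
      then have "(\<Sum>B\<in>G. card (Inl -` B)) \<le> of_nat (card G) * K" by (rule sum_bounded_above)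
      then show ?thesis by simp
    qed
    also have "\<dots> \<le> (card E + d) * K" using cardG by (rule mult_le_mono1)
    finally have b: "card UG \<le> (card E + d) * K" .
    have "mc_length \<Theta>' \<le> (card E + d) * K * card S" using a b mult_le_mono1 le_trans by blast
    also have "\<dots> = (card E + d) * (K * card S)" by (simp add: mult.assoc)
    also have "\<dots> \<le> (card E + d) * X" using KS by (rule mult_le_mono2)
    finally show ?thesis by (simp add: X_def d_def)
  qed
  show ?thesis using P1 P2 P3 P4 P5 by blast
qed

end
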